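(* For all probability measures $P,Q$ and $\omega\in(0,1)$, with relative entropies in nats: (i) $\mathcal{I}_\omega(P\|Q)\le \omega-\frac12+\sqrt{\frac14-\frac{\omega(1-\omega)}{1+\omega\chi^2(P\|Q)}}$ for $\omega\in(0,\frac12]$, and $\mathcal{I}_\omega(P\|Q)\le\frac12-\omega+\sqrt{\frac14-\frac{\omega(1-\omega)}{1+\omega\chi^2(Q\|P)}}$ for $\omega\in(\frac12,1)$; (ii) $\mathcal{I}_\omega(P\|Q)\le\omega\,c_{(1-\omega)/\omega}\,D(P\|Q)$ for $\omega\in(0,\frac12)$; $\mathcal{I}_{1/2}(P\|Q)\le\sqrt{\frac18\min\{D(P\|Q),D(Q\|P)\}}$; and $\mathcal{I}_\omega(P\|Q)\le(1-\omega)\,c_{\omega/(1-\omega)}\,D(Q\|P)$ for $\omega\in(\frac12,1)$; (iii) $\mathcal{I}_\omega(P\|Q)\le\omega-\frac12+\sqrt{\frac14-\omega(1-\omega)e^{-D(P\|Q)}}$ for $\omega\in(0,\frac12]$, and $\mathcal{I}_\omega(P\|Q)\le\frac12-\omega+\sqrt{\frac14-\omega(1-\omega)e^{-D(Q\|P)}}$ for $\omega\in(\frac12,1)$.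
   Context: For densities $p,q$ w.r.t. a dominating measure $\mu$: DeGroot statistical information $\mathcal{I}_\omega(P\|Q):=\int q\,\phi_\omega(p/q)\,\mathrm{d}\mu$ with $\phi_\omega(t)=\min\{\omega,1-\omega\}-\min\{\omega t,1-\omega\}$ (standard $f$-divergence conventions at $0$); $\chi^2(P\|Q):=\int\frac{(p-q)^2}{q}\,\mathrm{d}\mu$; $D(P\|Q):=\int p\ln\frac pq\,\mathrm{d}\mu$ (nats). For $\gamma>1$: $t_\gamma:=-\gamma\,W_{-1}\bigl(-\frac1\gamma e^{-1/\gamma}\bigr)$, where $W_{-1}$ is the branch of the Lambert $W$ function on $[-1/e,0)$ with values in $(-\infty,-1]$, and $c_\gamma:=\frac{t_\gamma-\gamma}{t_\gamma\ln t_\gamma+1-t_\gamma}$. *)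

theory Defs
  imports "HOL-Analysis.Analysis"
begin

text \<open>Densities p, q of P, Q w.r.t. a dominating measure mu.\<close>

definition is_density :: "'a measure \<Rightarrow> ('a \<Rightarrow> real) \<Rightarrow> bool" where
  "is_density M p \<longleftrightarrow> p \<in> borel_measurable M \<and> (\<forall>x\<in>space M. 0 \<le> p x)
      \<and> (\<integral>\<^sup>+ x. ennreal (p x) \<partial>M) = 1"

definition phi_deg :: "real \<Rightarrow> real \<Rightarrow> real" where
  "phi_deg \<omega> t = min \<omega> (1 - \<omega>) - min (\<omega> * t) (1 - \<omega>)"

text \<open>DeGroot statistical information. Conventions: 0 * phi(0/0) = 0 and
  0 * phi(a/0) = a * lim_{t->oo} phi(t)/t = 0 (phi is bounded).\<close>
definition deGroot :: "real \<Rightarrow> 'a measure \<Rightarrow> ('a \<Rightarrow> real) \<Rightarrow> ('a \<Rightarrow> real) \<Rightarrow> real" where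
  "deGroot \<omega> M p q = (\<integral>x. (if q x = 0 then 0 else q x * phi_deg \<omega> (p x / q x)) \<partial>M)"

text \<open>Chi-squared divergence, extended-real valued (value \<infinity> if P is not << Q).\<close>
definition chi2 :: "'a measure \<Rightarrow> ('a \<Rightarrow> real) \<Rightarrow> ('a \<Rightarrow> real) \<Rightarrow> ereal" where
  "chi2 M p q = enn2ereal (\<integral>\<^sup>+ x. (if q x = 0 then (if p x = 0 then 0 else \<infinity>)
                                   else ennreal ((p x - q x)\<^sup>2 / q x)) \<partial>M)"

text \<open>Relative entropy in nats, extended-real valued: integral of the positive part
  minus integral of the negative part of p ln(p/q), with 0 ln(0/q) = 0, p ln(p/0) = \<infinity>.\<close>
definition KL :: "'a measure \<Rightarrow> ('a \<Rightarrow> real) \<Rightarrow> ('a \<Rightarrow> real) \<Rightarrow> ereal" where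
  "KL M p q =
     enn2ereal (\<integral>\<^sup>+ x. (if p x = 0 then 0 else if q x = 0 then \<infinity>
                          else ennreal (p x * ln (p x / q x))) \<partial>M)
   - enn2ereal (\<integral>\<^sup>+ x. (if p x = 0 \<or> q x = 0 then 0
                          else ennreal (- (p x * ln (p x / q x)))) \<partial>M)"

definition lambertW_m1 :: "real \<Rightarrow> real" where
  "lambertW_m1 y = (THE w. w \<le> -1 \<and> w * exp w = y)"

definition t_gam :: "real \<Rightarrow> real" where
  "t_gam \<gamma> = - \<gamma> * lambertW_m1 (- (1 / \<gamma>) * exp (- 1 / \<gamma>))"

definition c_gam :: "real \<Rightarrow> real" where
  "c_gam \<gamma> = (t_gam \<gamma> - \<gamma>) / (t_gam \<gamma> * ln (t_gam \<gamma>) + 1 - t_gam \<gamma>)"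

definition esqrt :: "ereal \<Rightarrow> ereal" where
  "esqrt z = (case z of ereal r \<Rightarrow> ereal (sqrt r) | PInfty \<Rightarrow> \<infinity> | MInfty \<Rightarrow> -\<infinity>)"

definition expneg :: "ereal \<Rightarrow> real" where
  "expneg z = (case z of ereal r \<Rightarrow> exp (- r) | PInfty \<Rightarrow> 0 | MInfty \<Rightarrow> 0)"

definition ratio_chi :: "real \<Rightarrow> real \<Rightarrow> ereal \<Rightarrow> real" where
  "ratio_chi a w z = (case z of ereal r \<Rightarrow> a / (1 + w * r) | PInfty \<Rightarrow> 0 | MInfty \<Rightarrow> 0)"

end

theory Submission
  imports Defs "HOL-Probability.Hoeffding"
begin

lemma dens:
  assumes "is_density M p"
  shows "p \<in> borel_measurable M" "integrable M p" "integral\<^sup>L M p = 1" "\<And>x. x \<in> space M \<Longrightarrow> 0 \<le> p x"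
proof -
  show m: "p \<in> borel_measurable M" and nn: "\<And>x. x \<in> space M \<Longrightarrow> 0 \<le> p x"
    using assms unfolding is_density_def by auto
  have one: "(\<integral>\<^sup>+ x. ennreal (p x) \<partial>M) = 1" using assms unfolding is_density_def by auto
  show "integrable M p"
    by (rule integrableI_nonneg) (use m nn one in auto)
  have "integral\<^sup>L M p = enn2real (\<integral>\<^sup>+ x. ennreal (p x) \<partial>M)"
    by (rule integral_eq_nn_integral) (use m nn in auto)
  then show "integral\<^sup>L M p = 1" using one by simp
qed

definition mm :: "real \<Rightarrow> 'a measure \<Rightarrow> ('a \<Rightarrow> real) \<Rightarrow> ('a \<Rightarrow> real) \<Rightarrow> real" where
  "mm w M p q = (\<integral>x. min (w * p x) ((1 - w) * q x) \<partial>M)"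

lemma mm_swap: "mm (1 - w) M q p = mm w M p q"
  unfolding mm_def by (simp add: min.commute)

lemma integrable_min:
  assumes dP: "is_density M p" and dQ: "is_density M q" and w0: "0 < w" and w1: "w < 1"
  shows "integrable M (\<lambda>x. min (w * p x) ((1 - w) * q x))"
proof (rule Bochner_Integration.integrable_bound[where f="\<lambda>x. w * p x"])
  show "integrable M (\<lambda>x. w * p x)" using dens[OF dP] by auto
  show "(\<lambda>x. min (w * p x) ((1 - w) * q x)) \<in> borel_measurable M"
    using dens(1)[OF dP] dens(1)[OF dQ] by measurable
  show "AE x in M. norm (min (w * p x) ((1 - w) * q x)) \<le> norm (w * p x)"
    using dens(4)[OF dP] dens(4)[OF dQ] w0 w1 by (auto intro!: AE_I2)
qed

lemma mm_bounds:
  assumes dP: "is_density M p" and dQ: "is_density M q" and w0: "0 < w" and w1: "w < 1"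
  shows "0 \<le> mm w M p q" "mm w M p q \<le> w" "mm w M p q \<le> 1 - w"
proof -
  note I = integrable_min[OF dP dQ w0 w1]
  note P = dens[OF dP] and Q = dens[OF dQ]
  show "0 \<le> mm w M p q" unfolding mm_def
    by (rule integral_nonneg_AE) (use P(4) Q(4) w0 w1 in auto)
  have "mm w M p q \<le> (\<integral>x. w * p x \<partial>M)" unfolding mm_def
    by (rule integral_mono_AE) (use I P in auto)
  then show "mm w M p q \<le> w" using P by simp
  have "mm w M p q \<le> (\<integral>x. (1 - w) * q x \<partial>M)" unfolding mm_def
    by (rule integral_mono_AE) (use I Q in auto)
  then show "mm w M p q \<le> 1 - w" using Q by simp
qed

lemma deGroot_eq:
  assumes dP: "is_density M p" and dQ: "is_density M q" and w0: "0 < w" and w1: "w < 1"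
  shows "deGroot w M p q = min w (1 - w) - mm w M p q"
proof -
  note I = integrable_min[OF dP dQ w0 w1]
  note P = dens[OF dP] and Q = dens[OF dQ]
  have pt: "(if q x = 0 then 0 else q x * phi_deg w (p x / q x))
      = min w (1 - w) * q x - min (w * p x) ((1 - w) * q x)" if x: "x \<in> space M" for x
  proof (cases "q x = 0")
    case True
    then show ?thesis using P(4)[OF x] w0 by simp
  next
    case False
    then have qp: "q x > 0" using Q(4)[OF x] by simp
    have "q x * min (w * (p x / q x)) (1 - w) = min (q x * (w * (p x / q x))) (q x * (1 - w))"
      using qp by (simp add: min_mult_distrib_left)
    also have "\<dots> = min (w * p x) ((1 - w) * q x)" using qp by (simp add: field_simps)
    finally show ?thesis using False unfolding phi_deg_def by (simp add: algebra_simps)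
  qed
  have "deGroot w M p q = (\<integral>x. min w (1 - w) * q x - min (w * p x) ((1 - w) * q x) \<partial>M)"
    unfolding deGroot_def by (rule Bochner_Integration.integral_cong) (use pt in auto)
  also have "\<dots> = (\<integral>x. min w (1 - w) * q x \<partial>M) - mm w M p q"
    unfolding mm_def by (rule Bochner_Integration.integral_diff) (use I Q in auto)
  also have "\<dots> = min w (1 - w) - mm w M p q" using Q by simp
  finally show ?thesis .
qed

lemma enn_aux: "(h::real) \<le> f \<Longrightarrow> ennreal (-f) + ennreal h \<le> ennreal f + ennreal (-h)"
  by (cases "f \<ge> 0"; cases "h \<ge> 0") (auto simp: ennreal_neg ennreal_plus[symmetric] intro!: ennreal_leI)

lemma ereal_aux:
  fixes Xp Xn Hp Hm :: ennreal
  assumes "Xn + Hp \<le> Xp + Hm" "Xn < top" "Hp < top" "Hm < top"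
  shows "ereal (enn2real Hp - enn2real Hm) \<le> enn2ereal Xp - enn2ereal Xn"
proof (cases "Xp = top")
  case True
  then show ?thesis using assms(2) by (cases Xn rule: ennreal_cases) auto
next
  case False
  obtain a b c d where "Xp = ennreal a" "Xn = ennreal b" "Hp = ennreal c" "Hm = ennreal d"
     "0\<le>a" "0\<le>b" "0\<le>c" "0\<le>d"
    using False assms(2-4) by (metis ennreal_cases less_top)
  then show ?thesis using assms(1) by (auto simp: ennreal_plus[symmetric] ennreal_le_iff simp del: ennreal_plus)
qed

lemma set_zero: "(p::'a\<Rightarrow>real) \<in> borel_measurable M \<Longrightarrow> {x\<in>space M. p x = 0} \<in> sets M"
  using pred_eq_const1[where N=borel and f=p and M=M and c=0] by (auto simp: pred_def)
lemma Fp_meas: assumes "p \<in> borel_measurable M" "q \<in> borel_measurable M"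
  shows "(\<lambda>x. if p x = 0 then 0 else if q x = 0 then (\<infinity>::ennreal) else ennreal (p x * ln (p x / q x))) \<in> borel_measurable M"
  apply (intro measurable_If set_zero assms)
  using assms by measurable
lemma Fn_meas: assumes "p \<in> borel_measurable M" "q \<in> borel_measurable M"
  shows "(\<lambda>x. if p x = 0 \<or> q x = 0 then 0 else ennreal (- (p x * ln (p x / q x)))) \<in> borel_measurable M"
  apply (intro measurable_If sets.sets_Collect_disj set_zero assms)
  using assms by measurable

lemma int_fin:
  assumes "integrable M h"
  shows "(\<integral>\<^sup>+ x. ennreal (h x) \<partial>M) < top" "(\<integral>\<^sup>+ x. ennreal (- h x) \<partial>M) < top"
proof -
  have fin: "(\<integral>\<^sup>+ x. ennreal (norm (h x)) \<partial>M) < top" using assms by (simp add: integrable_iff_bounded)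
  have "(\<integral>\<^sup>+ x. ennreal (h x) \<partial>M) \<le> (\<integral>\<^sup>+ x. ennreal (norm (h x)) \<partial>M)"
    by (rule nn_integral_mono) (simp add: ennreal_leI)
  then show "(\<integral>\<^sup>+ x. ennreal (h x) \<partial>M) < top" using fin by (rule le_less_trans)
  have "(\<integral>\<^sup>+ x. ennreal (- h x) \<partial>M) \<le> (\<integral>\<^sup>+ x. ennreal (norm (h x)) \<partial>M)"
    by (rule nn_integral_mono) (simp add: ennreal_leI)
  then show "(\<integral>\<^sup>+ x. ennreal (- h x) \<partial>M) < top" using fin by (rule le_less_trans)
qed

lemma KL_lower:
  assumes dP: "is_density M p" and dQ: "is_density M q" and hI: "integrable M h"
    and h1: "\<And>x. x \<in> space M \<Longrightarrow> p x > 0 \<Longrightarrow> q x > 0 \<Longrightarrow> h x \<le> p x * ln (p x / q x)"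
    and h2: "\<And>x. x \<in> space M \<Longrightarrow> p x = 0 \<Longrightarrow> h x \<le> 0"
  shows "ereal (integral\<^sup>L M h) \<le> KL M p q"
proof -
  note P = dens[OF dP] and Q = dens[OF dQ]
  have hm: "h \<in> borel_measurable M" using hI by auto
  define Fp where "Fp x = (if p x = 0 then 0 else if q x = 0 then \<infinity>
                          else ennreal (p x * ln (p x / q x)))" for x
  define Fn where "Fn x = (if p x = 0 \<or> q x = 0 then 0
                          else ennreal (- (p x * ln (p x / q x))))" for x
  have KL: "KL M p q = enn2ereal (\<integral>\<^sup>+ x. Fp x \<partial>M) - enn2ereal (\<integral>\<^sup>+ x. Fn x \<partial>M)"
    unfolding KL_def Fp_def Fn_def by simp
  have Fpm: "Fp \<in> borel_measurable M" unfolding Fp_def by (rule Fp_meas[OF P(1) Q(1)])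
  have Fnm: "Fn \<in> borel_measurable M" unfolding Fn_def by (rule Fn_meas[OF P(1) Q(1)])
  have pt: "Fn x + ennreal (h x) \<le> Fp x + ennreal (- h x)" if x: "x \<in> space M" for x
  proof -
    consider "p x = 0" | "p x > 0" "q x = 0" | "p x > 0" "q x > 0"
      using P(4)[OF x] Q(4)[OF x] by force
    then show ?thesis
    proof cases
      case 1 then show ?thesis using h2[OF x] by (simp add: Fp_def Fn_def ennreal_neg)
    next
      case 2 then show ?thesis by (simp add: Fp_def Fn_def)
    next
      case 3 then show ?thesis using h1[OF x] enn_aux[of "h x" "p x * ln (p x / q x)"]
        by (simp add: Fp_def Fn_def)
    qed
  qed
  have "(\<integral>\<^sup>+ x. Fn x \<partial>M) + (\<integral>\<^sup>+ x. ennreal (h x) \<partial>M) = (\<integral>\<^sup>+ x. Fn x + ennreal (h x) \<partial>M)"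
    by (rule nn_integral_add[symmetric]) (use Fnm hm in auto)
  also have "\<dots> \<le> (\<integral>\<^sup>+ x. Fp x + ennreal (- h x) \<partial>M)"
    by (rule nn_integral_mono) (use pt in auto)
  also have "\<dots> = (\<integral>\<^sup>+ x. Fp x \<partial>M) + (\<integral>\<^sup>+ x. ennreal (- h x) \<partial>M)"
    by (rule nn_integral_add) (use Fpm hm in auto)
  finally have main: "(\<integral>\<^sup>+ x. Fn x \<partial>M) + (\<integral>\<^sup>+ x. ennreal (h x) \<partial>M)
     \<le> (\<integral>\<^sup>+ x. Fp x \<partial>M) + (\<integral>\<^sup>+ x. ennreal (- h x) \<partial>M)" .
  have Fnq: "Fn x \<le> ennreal (q x)" if x: "x \<in> space M" for x
  proof (cases "p x = 0 \<or> q x = 0")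
    case True then show ?thesis by (simp add: Fn_def)
  next
    case False
    then have pp: "p x > 0" and qp: "q x > 0" using P(4)[OF x] Q(4)[OF x] by auto
    have "ln (q x / p x) \<le> q x / p x - 1" using pp qp by (intro ln_le_minus_one) auto
    then have "p x * ln (q x / p x) \<le> p x * (q x / p x - 1)" using pp by (simp add: mult_left_mono)
    also have "\<dots> = q x - p x" using pp by (simp add: field_simps)
    finally have "p x * ln (q x / p x) \<le> q x - p x" .
    moreover have "ln (p x / q x) = - ln (q x / p x)" using pp qp by (simp add: ln_div)
    ultimately have "- (p x * ln (p x / q x)) \<le> q x" using pp by simp
    then show ?thesis using False by (simp add: Fn_def ennreal_leI)
  qed
  have "(\<integral>\<^sup>+ x. Fn x \<partial>M) \<le> (\<integral>\<^sup>+ x. ennreal (q x) \<partial>M)"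
    by (rule nn_integral_mono) (use Fnq in auto)
  also have "\<dots> = 1" using dQ unfolding is_density_def by simp
  finally have Fnfin: "(\<integral>\<^sup>+ x. Fn x \<partial>M) < top" by (simp add: le_less_trans)
  have "ereal (integral\<^sup>L M h) = ereal (enn2real (\<integral>\<^sup>+ x. ennreal (h x) \<partial>M) - enn2real (\<integral>\<^sup>+ x. ennreal (- h x) \<partial>M))"
    using real_lebesgue_integral_def[OF hI] by simp
  also have "\<dots> \<le> KL M p q" unfolding KL
    by (rule ereal_aux[OF main Fnfin int_fin[OF hI]])
  finally show ?thesis .
qed

lemma KL_nonneg:
  assumes dP: "is_density M p" and dQ: "is_density M q"
  shows "0 \<le> KL M p q"
proof -
  note P = dens[OF dP] and Q = dens[OF dQ]
  have "ereal (\<integral>x. p x - q x \<partial>M) \<le> KL M p q"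
  proof (rule KL_lower[OF dP dQ])
    show "integrable M (\<lambda>x. p x - q x)" using P Q by auto
    fix x assume x: "x \<in> space M" and pp: "p x > 0" and qp: "q x > 0"
    have "ln (q x / p x) \<le> q x / p x - 1" using pp qp by (intro ln_le_minus_one) auto
    then have "p x * ln (q x / p x) \<le> p x * (q x / p x - 1)" using pp by (simp add: mult_left_mono)
    also have "\<dots> = q x - p x" using pp by (simp add: field_simps)
    finally have "p x * ln (q x / p x) \<le> q x - p x" .
    moreover have "ln (p x / q x) = - ln (q x / p x)" using pp qp by (simp add: ln_div)
    ultimately show "p x - q x \<le> p x * ln (p x / q x)" by simp
  next
    fix x assume x: "x \<in> space M" "p x = 0" then show "p x - q x \<le> 0" using Q(4) by auto
  qed
  moreover have "(\<integral>x. p x - q x \<partial>M) = 0" using P Q by simp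
  ultimately show ?thesis by (simp add: zero_ereal_def)
qed

lemma ln_strict: assumes "(x::real) > 1" shows "ln x < x - 1"
  using ln_add_one_self_less_self[of "x - 1"] assms by simp

lemma ln_gt_strict: assumes "(g::real) > 1" shows "ln g > 1 - 1 / g"
proof -
  define s where "s = sqrt g"
  have s1: "s > 1" using assms by (simp add: s_def)
  have gs: "g = s * s" using assms by (simp add: s_def)
  have "ln (1 / s) \<le> 1 / s - 1" using s1 by (intro ln_le_minus_one) auto
  then have l: "ln s \<ge> 1 - 1 / s" using s1 by (simp add: ln_div)
  have "ln g = 2 * ln s" using s1 gs by (simp add: ln_mult)
  moreover have "2 * (1 - 1 / s) > 1 - 1 / g"
  proof -
    have "(1 - 1 / s)^2 > 0" using s1 by simp
    then have A: "s*2 < 1 + s * s" using s1 by (simp add: field_simps power2_eq_square)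
    have "s * (s * 2) < s * (1 + s * s)" by (rule mult_strict_left_mono[OF A]) (use s1 in simp)
    then show ?thesis using s1 gs by (simp add: field_simps power2_eq_square)
  qed
  ultimately show ?thesis using l by argo
qed

lemma h_decr:
  assumes g: "(g::real) > 1" and s: "g \<le> s" and st: "s < t"
  shows "g * ln t - t + 1 < g * ln s - s + 1"
proof -
  have sp: "s > 0" using g s by linarith
  have "ln (t / s) < t / s - 1" using st sp by (intro ln_strict) (simp add: field_simps)
  then have "ln t - ln s < (t - s) / s" using sp st by (simp add: ln_div diff_divide_distrib)
  also have "\<dots> \<le> (t - s) / g" using sp g s st by (intro divide_left_mono) auto
  finally have "g * (ln t - ln s) < t - s" using g by (simp add: field_simps)
  then show ?thesis by (simp add: algebra_simps)
qed

lemma t_gam_props: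
  assumes g: "(g::real) > 1"
  shows "t_gam g > g" "t_gam g - 1 = g * ln (t_gam g)"
proof -
  define h where "h t = g * ln t - t + 1" for t
  define T where "T = (2 * g + 1)^2"
  have hg: "h g > 0" using ln_gt_strict[OF g] g by (simp add: h_def field_simps)
  have "ln T = 2 * ln (2 * g + 1)" using g by (simp add: T_def ln_realpow)
  also have "\<dots> < 2 * (2 * g + 1)"
  proof -
    have "ln (2*g+1) < 2*g+1" by (rule ln_less_self) (use g in simp)
    then show ?thesis by argo
  qed
  finally have "g * ln T < g * (2 * (2 * g + 1))" using g by simp
  then have hT: "h T < 0" using g by (simp add: h_def T_def power2_eq_square algebra_simps)
  have gT: "g \<le> T" using g by (simp add: T_def power2_eq_square algebra_simps)
  have "\<exists>x\<ge>g. x \<le> T \<and> h x = 0"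
    by (rule IVT2) (use hT hg gT g in \<open>auto simp: h_def intro!: continuous_intros\<close>)
  then obtain t0 where t0: "t0 \<ge> g" "h t0 = 0" by blast
  have t0g: "t0 > g" using t0 hg by (cases "t0 = g") auto
  have t0p: "t0 > 0" using t0g g by linarith
  have eq: "g * ln t0 = t0 - 1" using t0 by (simp add: h_def)
  have uniq: "t = t0" if "t \<ge> g" "h t = 0" for t
  proof (rule ccontr)
    assume "t \<noteq> t0"
    then consider "t < t0" | "t0 < t" by linarith
    then show False
    proof cases
      case 1 then show ?thesis using h_decr[OF g that(1) 1] that t0 by (simp add: h_def)
    next
      case 2 then show ?thesis using h_decr[OF g t0(1) 2] that t0 by (simp add: h_def)
    qed
  qed
  define y where "y = - (1 / g) * exp (- 1 / g)"
  have W: "lambertW_m1 y = - t0 / g"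
    unfolding lambertW_m1_def
  proof (rule the_equality)
    show "- t0 / g \<le> -1 \<and> - t0 / g * exp (- t0 / g) = y"
    proof
      show "- t0 / g \<le> -1" using t0g g by (simp add: field_simps)
      have "exp (ln t0) = exp ((t0 - 1) / g)" using eq g by (simp add: field_simps)
      then have "t0 = exp ((t0 - 1) / g)" using t0p by simp
      then have "t0 * exp (- t0 / g) = exp ((t0 - 1) / g) * exp (- t0 / g)" by simp
      also have "\<dots> = exp (- 1 / g)" using g by (simp add: exp_add[symmetric] field_simps)
      finally show "- t0 / g * exp (- t0 / g) = y" unfolding y_def using g
        by (simp add: field_simps)
    qed
  next
    fix w assume w: "w \<le> -1 \<and> w * exp w = y"
    define t where "t = - g * w"
    have tg: "t \<ge> g" using w g mult_left_mono[of 1 "-w" g] by (simp add: t_def)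
    have tp: "t > 0" using tg g by linarith
    have wt: "w = - t / g" using g by (simp add: t_def)
    have "t * exp (- t / g) = exp (- 1 / g)" using w g unfolding y_def wt by (simp add: field_simps)
    then have "ln (t * exp (- t / g)) = - 1 / g" by simp
    then have "ln t - t / g = - 1 / g" using tp by (simp add: ln_mult)
    then have "g * (ln t - t / g) = g * (- 1 / g)" by simp
    then have "g * ln t - t = -1" using g by (simp add: right_diff_distrib)
    then have "h t = 0" unfolding h_def by simp
    then have "t = t0" using uniq tg by blast
    then show "w = - t0 / g" using wt by simp
  qed
  have tt: "t_gam g = t0" unfolding t_gam_def W[unfolded y_def] using g by simp
  show "t_gam g > g" using tt t0g by simp
  show "t_gam g - 1 = g * ln (t_gam g)" using tt eq by simp
qed

lemma c_gam_eq:
  assumes g: "(g::real) > 1"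
  shows "c_gam g = 1 / ln (t_gam g)" "ln (t_gam g) > 0"
proof -
  note tp = t_gam_props[OF g]
  define t where "t = t_gam g"
  have t1: "t > 1" using tp g by (simp add: t_def)
  have l: "ln t > 0" using t1 by simp
  have "t * ln t + 1 - t = (t - g) * ln t" using tp(2) by (simp add: t_def algebra_simps)
  then show "c_gam g = 1 / ln (t_gam g)" using tp(1) l unfolding c_gam_def t_def[symmetric]
    by simp
  show "ln (t_gam g) > 0" using l t_def by simp
qed

lemma pt_ln:
  assumes "(p::real) > 0" "q > 0" "l > 0"
  shows "p * ln l + p - l * q \<le> p * ln (p / q)"
proof -
  have "ln (l * q / p) \<le> l * q / p - 1" using assms by (intro ln_le_minus_one) auto
  then have "p * ln (l * q / p) \<le> p * (l * q / p - 1)" using assms by (simp add: mult_left_mono)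
  also have "\<dots> = l * q - p" using assms by (simp add: field_simps)
  finally have A: "p * ln (l * q / p) \<le> l * q - p" .
  have "ln (l * q / p) = ln l - ln (p / q)" using assms by (simp add: ln_div ln_mult)
  then have "p * ln (l * q / p) = p * ln l - p * ln (p / q)" by (simp add: right_diff_distrib)
  then show ?thesis using A by argo
qed

lemma int_ind:
  fixes f :: "'a \<Rightarrow> real"
  assumes "integrable M f" "Measurable.pred M P"
  shows "integrable M (\<lambda>x. (if P x then 1 else 0) * f x)"
proof (rule Bochner_Integration.integrable_bound[OF assms(1)])
  show "(\<lambda>x. (if P x then 1 else 0) * f x) \<in> borel_measurable M"
    using assms by measurable
  show "AE x in M. norm ((if P x then 1 else 0) * f x) \<le> norm (f x)" by (auto intro!: AE_I2)
qed

lemma lin_bound: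
  assumes dP: "is_density M p" and dQ: "is_density M q" and w0: "0 < w" and w1: "w < 1/2"
  shows "ereal (w - mm w M p q) \<le> ereal (w * c_gam ((1 - w) / w)) * KL M p q"
proof -
  note P = dens[OF dP] and Q = dens[OF dQ]
  note [measurable] = P(1) Q(1)
  define g where "g = (1 - w) / w"
  have g1: "g > 1" using w0 w1 by (simp add: g_def field_simps)
  have wg: "1 - w = w * g" using w0 by (simp add: g_def)
  define t0 where "t0 = t_gam g"
  define L where "L = ln t0"
  note tp = t_gam_props[OF g1, folded t0_def] and cg = c_gam_eq[OF g1, folded t0_def, folded L_def]
  have t01: "t0 > 1" using tp g1 by argo
  define ind where "ind x = (if p x > g * q x then 1 else (0::real))" for x
  have predm: "Measurable.pred M (\<lambda>x. p x > g * q x)" by measurable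
  have Ia: "integrable M (\<lambda>x. ind x * p x)" unfolding ind_def by (rule int_ind[OF P(2) predm])
  have Ib: "integrable M (\<lambda>x. ind x * q x)" unfolding ind_def by (rule int_ind[OF Q(2) predm])
  define a where "a = (\<integral>x. ind x * p x \<partial>M)"
  define b where "b = (\<integral>x. ind x * q x \<partial>M)"
  define h where "h x = L * (ind x * p x) + p x - q x - (t0 - 1) * (ind x * q x)" for x
  have hI: "integrable M h" unfolding h_def using Ia Ib P Q by auto
  have hint: "(\<integral>x. h x \<partial>M) = L * (a - g * b)"
  proof -
    have "(\<integral>x. h x \<partial>M) = L * a + 1 - 1 - (t0 - 1) * b"
      unfolding h_def a_def b_def using Ia Ib P Q by simp
    then show ?thesis using tp(2) by (simp add: algebra_simps L_def)
  qed
  have KLb: "ereal (L * (a - g * b)) \<le> KL M p q"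
  proof -
    have "ereal (\<integral>x. h x \<partial>M) \<le> KL M p q"
    proof (rule KL_lower[OF dP dQ hI])
      fix x assume x: "x \<in> space M" and pp: "p x > 0" and qp: "q x > 0"
      define l where "l = (if p x > g * q x then t0 else 1)"
      have lp: "l > 0" using t01 by (simp add: l_def)
      have "h x = p x * ln l + p x - l * q x"
        unfolding h_def l_def ind_def L_def by (simp add: algebra_simps)
      then show "h x \<le> p x * ln (p x / q x)" using pt_ln[OF pp qp lp] by simp
    next
      fix x assume x: "x \<in> space M" and p0: "p x = 0"
      have "0 \<le> (t0 - 1) * (ind x * q x)" using t01 Q(4)[OF x] by (simp add: ind_def)
      then show "h x \<le> 0" unfolding h_def using p0 Q(4)[OF x] by simp
    qed
    then show ?thesis using hint by simp
  qed
  have mmeq: "w - mm w M p q = w * (a - g * b)"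
  proof -
    have pt: "w * p x - min (w * p x) ((1 - w) * q x) = w * (ind x * p x) - (1 - w) * (ind x * q x)"
      if x: "x \<in> space M" for x
    proof (cases "p x > g * q x")
      case True
      then have "w * p x > (1 - w) * q x" using w0 wg by (simp add: mult_strict_left_mono)
      then show ?thesis using True by (simp add: ind_def)
    next
      case False
      then have "w * p x \<le> (1 - w) * q x" using w0 wg by (simp add: mult_left_mono)
      then show ?thesis using False by (simp add: ind_def)
    qed
    have "w - mm w M p q = (\<integral>x. w * p x \<partial>M) - mm w M p q" using P by simp
    also have "\<dots> = (\<integral>x. w * p x - min (w * p x) ((1 - w) * q x) \<partial>M)"
      unfolding mm_def
      by (rule Bochner_Integration.integral_diff[symmetric]) (use P integrable_min[OF dP dQ w0] w1 in auto)
    also have "\<dots> = (\<integral>x. w * (ind x * p x) - (1 - w) * (ind x * q x) \<partial>M)"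
      by (rule Bochner_Integration.integral_cong) (use pt in auto)
    also have "\<dots> = w * a - (1 - w) * b" unfolding a_def b_def using Ia Ib by simp
    finally show ?thesis using wg by (simp add: algebra_simps)
  qed
  have cpos: "w * c_gam g \<ge> 0" using cg w0 by simp
  have "ereal (w - mm w M p q) = ereal (w * c_gam g) * ereal (L * (a - g * b))"
    using mmeq cg by simp
  also have "\<dots> \<le> ereal (w * c_gam g) * KL M p q"
    by (rule ereal_mult_left_mono[OF KLb]) (use cpos in simp)
  finally show ?thesis unfolding g_def .
qed

lemma pinsker:
  assumes dP: "is_density M p" and dQ: "is_density M q"
  shows "ereal (8 * (1/2 - mm (1/2) M p q)^2) \<le> KL M p q"
proof -
  note P = dens[OF dP] and Q = dens[OF dQ]
  note [measurable] = P(1) Q(1)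
  define ind where "ind x = (if p x > q x then 1 else (0::real))" for x
  have predm: "Measurable.pred M (\<lambda>x. p x > q x)" by measurable
  have Ia: "integrable M (\<lambda>x. ind x * p x)" unfolding ind_def by (rule int_ind[OF P(2) predm])
  have Ib: "integrable M (\<lambda>x. ind x * q x)" unfolding ind_def by (rule int_ind[OF Q(2) predm])
  define a where "a = (\<integral>x. ind x * p x \<partial>M)"
  define b where "b = (\<integral>x. ind x * q x \<partial>M)"
  have b0: "b \<ge> 0" unfolding b_def by (rule integral_nonneg_AE) (use Q(4) in \<open>auto simp: ind_def\<close>)
  have ab: "a - b = (\<integral>x. ind x * p x - ind x * q x \<partial>M)" unfolding a_def b_def using Ia Ib by simp
  have abn: "a - b \<ge> 0" unfolding ab by (rule integral_nonneg_AE) (auto simp: ind_def)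
  define s where "s = 4 * (a - b)"
  have s0: "s \<ge> 0" using abn by (simp add: s_def)
  define Z where "Z = 1 + b * (exp s - 1)"
  have es: "exp s \<ge> 1" using s0 by simp
  have Zp: "Z > 0" unfolding Z_def using b0 es by (simp add: add_pos_nonneg)
  define h where "h x = s * (ind x * p x) - ln Z * p x + p x - q x / Z - ((exp s - 1) / Z) * (ind x * q x)" for x
  have hI: "integrable M h" unfolding h_def using Ia Ib P Q by auto
  have hint: "(\<integral>x. h x \<partial>M) = s * a - ln Z"
  proof -
    have "(\<integral>x. h x \<partial>M) = s * a - ln Z + 1 - 1 / Z - ((exp s - 1) / Z) * b"
      unfolding h_def a_def b_def using Ia Ib P Q by simp
    also have "1 - 1 / Z - ((exp s - 1) / Z) * b = 0" using Zp by (simp add: Z_def field_simps)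
    ultimately show ?thesis by argo
  qed
  have KLb: "ereal (s * a - ln Z) \<le> KL M p q"
  proof -
    have "ereal (\<integral>x. h x \<partial>M) \<le> KL M p q"
    proof (rule KL_lower[OF dP dQ hI])
      fix x assume x: "x \<in> space M" and pp: "p x > 0" and qp: "q x > 0"
      define l where "l = (if p x > q x then exp s else 1) / Z"
      have lp: "l > 0" using Zp by (simp add: l_def)
      have lnl: "ln l = s * ind x - ln Z" using Zp by (simp add: l_def ind_def ln_div)
      have "h x = p x * ln l + p x - l * q x"
        unfolding lnl unfolding h_def l_def ind_def using Zp by (simp add: field_simps)
      then show "h x \<le> p x * ln (p x / q x)" using pt_ln[OF pp qp lp] by simp
    next
      fix x assume x: "x \<in> space M" and p0: "p x = 0"
      have "0 \<le> q x / Z + ((exp s - 1) / Z) * (ind x * q x)"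
        using Q(4)[OF x] Zp es by (simp add: ind_def)
      then show "h x \<le> 0" unfolding h_def using p0 by simp
    qed
    then show ?thesis using hint by simp
  qed
  have hoef: "- s * b + ln (1 + b * (exp s - 1)) \<le> s^2 / 8"
    by (rule Hoeffdings_lemma_aux[OF s0 b0])
  have "2 * (a - b)^2 \<le> s * a - ln Z"
    using hoef unfolding Z_def s_def by (simp add: power2_eq_square algebra_simps)
  have mmeq: "1/2 - mm (1/2) M p q = (a - b) / 2"
  proof -
    have pt: "(1/2) * p x - min ((1/2) * p x) ((1 - 1/2) * q x) = (1/2) * (ind x * p x - ind x * q x)"
      if x: "x \<in> space M" for x
      by (simp add: ind_def)
    have "1/2 - mm (1/2) M p q = (\<integral>x. (1/2) * p x \<partial>M) - mm (1/2) M p q" using P by simp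
    also have "\<dots> = (\<integral>x. (1/2) * p x - min ((1/2) * p x) ((1 - 1/2) * q x) \<partial>M)"
      unfolding mm_def
      by (rule Bochner_Integration.integral_diff[symmetric]) (use P integrable_min[OF dP dQ, of "1/2"] in simp_all)
    also have "\<dots> = (\<integral>x. (1/2) * (ind x * p x - ind x * q x) \<partial>M)"
      by (rule Bochner_Integration.integral_cong) (use pt in auto)
    also have "\<dots> = (a - b) / 2" unfolding ab by simp
    finally show ?thesis .
  qed
  have "8 * (1/2 - mm (1/2) M p q)^2 = 2 * (a - b)^2" unfolding mmeq by (simp add: power2_eq_square)
  then show ?thesis using KLb \<open>2 * (a - b)^2 \<le> s * a - ln Z\<close>
    by (metis ereal_less_eq(3) order_trans)
qed

lemma amgm2: assumes "(x::real) \<ge> 0" "y \<ge> 0" "c > 0" shows "2 * sqrt (x * y) \<le> c * x + y / c"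
proof -
  define a where "a = sqrt (c * x)"
  define b where "b = sqrt (y / c)"
  have "a * b = sqrt (x * y)" using assms unfolding a_def b_def
    by (simp add: real_sqrt_mult[symmetric])
  moreover have "a^2 = c * x" "b^2 = y / c" using assms by (auto simp: a_def b_def)
  moreover have "2 * (a * b) \<le> a^2 + b^2" using sum_squares_bound[of a b] by (simp add: power2_eq_square)
  ultimately show ?thesis by simp
qed

lemma sqrt_pq_le: assumes "(p::real) \<ge> 0" "q \<ge> 0" shows "sqrt (p * q) \<le> (p + q) / 2"
  using amgm2[OF assms, of 1] by simp

lemma bh_KL:
  assumes dP: "is_density M p" and dQ: "is_density M q"
  shows "expneg (KL M p q) \<le> (\<integral>x. sqrt (p x * q x) \<partial>M)^2"
proof -
  note P = dens[OF dP] and Q = dens[OF dQ]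
  note [measurable] = P(1) Q(1)
  have IB: "integrable M (\<lambda>x. sqrt (p x * q x))"
  proof (rule Bochner_Integration.integrable_bound[where f="\<lambda>x. (p x + q x) / 2"])
    show "integrable M (\<lambda>x. (p x + q x) / 2)" using P Q by auto
    show "(\<lambda>x. sqrt (p x * q x)) \<in> borel_measurable M" by measurable
    show "AE x in M. norm (sqrt (p x * q x)) \<le> norm ((p x + q x) / 2)"
      using P(4) Q(4) sqrt_pq_le by (auto intro!: AE_I2)
  qed
  define B where "B = (\<integral>x. sqrt (p x * q x) \<partial>M)"
  have B0: "B \<ge> 0" unfolding B_def by (rule integral_nonneg_AE) (use P(4) Q(4) in \<open>auto intro!: AE_I2\<close>)
  have low: "ereal (- 2 * ln \<beta> + 2 - 2 * B / \<beta>) \<le> KL M p q" if bp: "\<beta> > 0" for \<beta>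
  proof -
    define h where "h x = - 2 * ln \<beta> * p x + 2 * p x - (2 / \<beta>) * sqrt (p x * q x)" for x
    have hI: "integrable M h" unfolding h_def using IB P by auto
    have "(\<integral>x. h x \<partial>M) = - 2 * ln \<beta> + 2 - 2 * B / \<beta>"
      unfolding h_def B_def using IB P by simp
    moreover have "ereal (\<integral>x. h x \<partial>M) \<le> KL M p q"
    proof (rule KL_lower[OF dP dQ hI])
      fix x assume x: "x \<in> space M" and pp: "p x > 0" and qp: "q x > 0"
      define l where "l = sqrt (p x / q x) / \<beta>"
      have lp: "l > 0" using pp qp bp by (simp add: l_def)
      have lnl: "ln l = ln (p x / q x) / 2 - ln \<beta>" using pp qp bp
        by (simp add: l_def ln_div ln_sqrt)
      have "l * q x = (sqrt (p x) / sqrt (q x) / \<beta>) * (sqrt (q x) * sqrt (q x))"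
        using qp by (simp add: l_def real_sqrt_divide)
      also have "\<dots> = sqrt (p x) * sqrt (q x) / \<beta>"
      proof -
        have gen: "\<And>a r. r > 0 \<Longrightarrow> a / r / \<beta> * (r * r) = a * r / \<beta>" by (simp add: field_simps)
        show ?thesis by (rule gen) (use qp in simp)
      qed
      finally have lq: "l * q x = sqrt (p x * q x) / \<beta>" by (simp add: real_sqrt_mult)
      have "p x * ln l + p x - l * q x \<le> p x * ln (p x / q x)" by (rule pt_ln[OF pp qp lp])
      then have "p x * (ln (p x / q x) / 2 - ln \<beta>) + p x - sqrt (p x * q x) / \<beta> \<le> p x * ln (p x / q x)"
        using lnl lq by simp
      then show "h x \<le> p x * ln (p x / q x)" unfolding h_def by (simp add: field_simps)
    next
      fix x assume x: "x \<in> space M" and p0: "p x = 0"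
      then show "h x \<le> 0" unfolding h_def by simp
    qed
    ultimately show ?thesis by simp
  qed
  have KL0: "KL M p q \<ge> 0" by (rule KL_nonneg[OF dP dQ])
  have main: "expneg (KL M p q) \<le> B^2"
  proof (cases "B > 0")
    case True
    have L: "ereal (- 2 * ln B) \<le> KL M p q" using low[OF True] True by simp
    show ?thesis
    proof (cases "KL M p q")
      case (real r)
      then have "- 2 * ln B \<le> r" using L by simp
      then have "exp (- r) \<le> exp (2 * ln B)" by simp
      also have "exp (2 * ln B) = B^2" using exp_of_nat_mult[of 2 "ln B"] True by simp
      finally show ?thesis using real by (simp add: expneg_def B_def)
    qed (auto simp: expneg_def)
  next
    case False
    then have B00: "B = 0" using B0 by simp
    have "KL M p q = \<infinity>"
    proof (cases "KL M p q")
      case (real r)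
      have "ereal (- 2 * ln (exp (- r)) + 2 - 2 * B / exp (- r)) \<le> KL M p q" by (rule low) simp
      then have "2 * r + 2 \<le> r" using real B00 by simp
      moreover have "r \<ge> 0" using KL0 real by simp
      ultimately show ?thesis by argo
    next
      case MInf then show ?thesis using KL0 by simp
    qed simp
    then show ?thesis by (simp add: expneg_def)
  qed
  then show ?thesis by (simp add: B_def)
qed

lemma bh_mm:
  assumes dP: "is_density M p" and dQ: "is_density M q" and w0: "0 < w" and w1: "w < 1"
  shows "w * (1 - w) * (\<integral>x. sqrt (p x * q x) \<partial>M)^2 \<le> mm w M p q * (1 - mm w M p q)"
proof -
  note P = dens[OF dP] and Q = dens[OF dQ]
  note [measurable] = P(1) Q(1)
  note mb = mm_bounds[OF dP dQ w0 w1]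
  have IB: "integrable M (\<lambda>x. sqrt (p x * q x))"
  proof (rule Bochner_Integration.integrable_bound[where f="\<lambda>x. (p x + q x) / 2"])
    show "integrable M (\<lambda>x. (p x + q x) / 2)" using P Q by auto
    show "(\<lambda>x. sqrt (p x * q x)) \<in> borel_measurable M" by measurable
    show "AE x in M. norm (sqrt (p x * q x)) \<le> norm ((p x + q x) / 2)"
      using P(4) Q(4) sqrt_pq_le by (auto intro!: AE_I2)
  qed
  note Im = integrable_min[OF dP dQ w0 w1]
  define m where "m = mm w M p q"
  define B where "B = (\<integral>x. sqrt (p x * q x) \<partial>M)"
  define x where "x = sqrt (w * (1 - w)) * B"
  have B0: "B \<ge> 0" unfolding B_def by (rule integral_nonneg_AE) (use P(4) Q(4) in \<open>auto intro!: AE_I2\<close>)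
  have x0: "x \<ge> 0" using B0 w0 w1 by (simp add: x_def)
  have key: "2 * x \<le> c * m + (1 - m) / c" if cp: "c > 0" for c
  proof -
    have pt: "2 * (sqrt (w * (1 - w)) * sqrt (p y * q y)) \<le>
       c * min (w * p y) ((1 - w) * q y) + (w * p y + (1 - w) * q y - min (w * p y) ((1 - w) * q y)) / c"
      if y: "y \<in> space M" for y
    proof -
      define u where "u = w * p y"
      define v where "v = (1 - w) * q y"
      have u0: "u \<ge> 0" and v0: "v \<ge> 0" using P(4)[OF y] Q(4)[OF y] w0 w1 by (auto simp: u_def v_def)
      have "sqrt (w * (1 - w)) * sqrt (p y * q y) = sqrt (min u v * max u v)"
      proof -
        have "min u v * max u v = u * v" by (cases "u \<le> v") (simp_all add: min_def max_def mult.commute)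
        also have "u * v = (w * (1 - w)) * (p y * q y)" by (simp add: u_def v_def)
        finally have e: "min u v * max u v = (w * (1 - w)) * (p y * q y)" .
        show ?thesis unfolding e by (rule real_sqrt_mult[symmetric])
      qed
      also have "2 * \<dots> \<le> c * min u v + max u v / c"
        by (rule amgm2) (use u0 v0 cp in auto)
      also have "max u v = u + v - min u v" by (simp add: min_def max_def)
      finally show ?thesis by (simp add: u_def v_def)
    qed
    have "(\<integral>y. 2 * (sqrt (w * (1 - w)) * sqrt (p y * q y)) \<partial>M) \<le>
       (\<integral>y. c * min (w * p y) ((1 - w) * q y) + (w * p y + (1 - w) * q y - min (w * p y) ((1 - w) * q y)) / c \<partial>M)"
      by (rule integral_mono_AE) (use IB Im P Q pt in auto)
    then show ?thesis
      using IB Im P Q unfolding x_def m_def mm_def B_def by (simp add: diff_divide_distrib add_divide_distrib)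
  qed
  have m0: "m \<ge> 0" and m1: "m < 1" using mb w1 by (auto simp: m_def)
  have "x^2 \<le> m * (1 - m)"
  proof (cases "x = 0")
    case True then show ?thesis using m0 m1 by simp
  next
    case False
    then have xp: "x > 0" using x0 by simp
    show ?thesis
    proof (cases "m = 0")
      case True
      have "2 * x \<le> (1 - m) / ((1 - m) / x)" using key[of "(1 - m) / x"] xp m1 True by simp
      then have "2 * x \<le> x" using xp m1 by simp
      then show ?thesis using xp by simp
    next
      case False
      then have mp: "m > 0" using m0 by simp
      have "2 * x \<le> (x / m) * m + (1 - m) / (x / m)" using key[of "x / m"] xp mp by simp
      then have "x \<le> m * (1 - m) / x" using xp mp by (simp add: field_simps)
      then show ?thesis using xp by (simp add: field_simps power2_eq_square)
    qed
  qed
  then show ?thesis using w0 w1 unfolding x_def m_def B_def by (simp add: power_mult_distrib)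
qed

lemma chi_pt:
  fixes u v c G :: real
  assumes u: "u \<ge> 0" and v: "v > 0" and c: "c > 0"
  shows "2 * u \<le> c * (u + u^2 / v) + (G^2 * (u + v) + (1 - 2 * G) * min u v) / c"
proof -
  define S where "S = u + v"
  have Sp: "S > 0" using u v by (simp add: S_def)
  define X where "X = u + u^2 / v"
  define Y where "Y = u * v / S"
  have X0: "X \<ge> 0" using u v by (simp add: X_def)
  have Y0: "Y \<ge> 0" using u v Sp by (simp add: Y_def)
  have X': "X = u * S / v" using v by (simp add: X_def S_def field_simps power2_eq_square)
  have XY: "X * Y = u^2" using v Sp by (simp add: X' Y_def field_simps power2_eq_square)
  have "2 * u = 2 * sqrt (X * Y)" using u XY by simp
  also have "\<dots> \<le> c * X + Y / c" by (rule amgm2[OF X0 Y0 c])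
  finally have A: "2 * u \<le> c * X + Y / c" .
  define n where "n = min u v"
  have nS: "n * (S - n) = u * v" by (cases "u \<le> v") (auto simp: n_def S_def min_def algebra_simps)
  have "(G^2 * S + (1 - 2 * G) * n - Y) * S = (G * S - n)^2"
  proof -
    have YS: "Y * S = u * v" using Sp by (simp add: Y_def)
    have e: "(G^2 * S + (1 - 2 * G) * n - Y) * S - (G * S - n)^2 = n * (S - n) - Y * S"
      by (simp add: algebra_simps power2_eq_square)
    then have "(G^2 * S + (1 - 2 * G) * n - Y) * S - (G * S - n)^2 = 0" using YS nS by simp
    then show ?thesis by simp
  qed
  then have "(G^2 * S + (1 - 2 * G) * n - Y) * S \<ge> 0" by simp
  then have "G^2 * S + (1 - 2 * G) * n - Y \<ge> 0" using Sp by (simp add: zero_le_mult_iff)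
  then have "Y / c \<le> (G^2 * S + (1 - 2 * G) * n) / c" using c by (simp add: divide_right_mono)
  then show ?thesis using A unfolding X_def S_def n_def by argo
qed

lemma chi_mm:
  assumes dP: "is_density M p" and dQ: "is_density M q" and w0: "0 < w" and w1: "w < 1"
    and chi: "chi2 M p q = ereal r"
  shows "w * (1 - w) \<le> mm w M p q * (1 - mm w M p q) * (1 + w * r)"
proof -
  note P = dens[OF dP] and Q = dens[OF dQ]
  note [measurable] = P(1) Q(1)
  note mb = mm_bounds[OF dP dQ w0 w1]
  note Im = integrable_min[OF dP dQ w0 w1]
  define F where "F x = (if q x = 0 then (if p x = 0 then 0 else \<infinity>) else ennreal ((p x - q x)\<^sup>2 / q x))" for x
  have Fm: "F \<in> borel_measurable M" unfolding F_def
    by (intro measurable_If set_zero P(1) Q(1) measurable_const) measurable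
  have chiF: "chi2 M p q = enn2ereal (\<integral>\<^sup>+ x. F x \<partial>M)" unfolding chi2_def F_def by simp
  have Xfin: "(\<integral>\<^sup>+ x. F x \<partial>M) \<noteq> \<infinity>" using chi chiF by auto
  then obtain X where X0: "(\<integral>\<^sup>+ x. F x \<partial>M) = ennreal X" "X \<ge> 0"
    by (cases "(\<integral>\<^sup>+ x. F x \<partial>M)" rule: ennreal_cases) auto
  then have X: "(\<integral>\<^sup>+ x. F x \<partial>M) = ennreal X" "X \<ge> 0" "X = r" using chi chiF by auto
  have r0: "r \<ge> 0" using X by simp
  have AEF: "AE x in M. F x \<noteq> \<infinity>"
    by (rule nn_integral_noteq_infinite[OF Fm]) (use X in simp)
  have AEpq: "AE x in M. q x = 0 \<longrightarrow> p x = 0"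
    using AEF by eventually_elim (auto simp: F_def infinity_ennreal_def split: if_splits)
  define k where "k x = (if q x = 0 then 0 else (p x - q x)\<^sup>2 / q x)" for x
  have km: "k \<in> borel_measurable M" unfolding k_def
    by (intro measurable_If set_zero P(1) Q(1) measurable_const) measurable
  have k0: "k x \<ge> 0" if "x \<in> space M" for x using Q(4)[OF that] by (simp add: k_def)
  have AEk: "AE x in M. F x = ennreal (k x)"
    using AEpq by eventually_elim (auto simp: F_def k_def)
  have nnk: "(\<integral>\<^sup>+ x. ennreal (k x) \<partial>M) = ennreal r"
    using nn_integral_cong_AE[OF AEk] X by simp
  have kI: "integrable M k"
    by (rule integrableI_nonneg) (use km k0 nnk in auto)
  have kint: "(\<integral>x. k x \<partial>M) = r"
  proof -
    have "(\<integral>x. k x \<partial>M) = enn2real (\<integral>\<^sup>+ x. ennreal (k x) \<partial>M)"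
      by (rule integral_eq_nn_integral) (use km k0 in auto)
    then show ?thesis using nnk r0 by simp
  qed
  define m where "m = mm w M p q"
  define S where "S = w + w^2 / (1 - w) * (r + 1)"
  have Sp: "S > 0" using w0 w1 r0 by (simp add: S_def add_pos_nonneg)
  define c where "c = w / S"
  have cp: "c > 0" using Sp w0 by (simp add: c_def)
  define R where "R x = c * (w * p x + w^2 / (1 - w) * (k x + 2 * p x - q x))
      + (m^2 * (w * p x + (1 - w) * q x) + (1 - 2 * m) * min (w * p x) ((1 - w) * q x)) / c" for x
  have pt: "2 * (w * p x) \<le> R x" if x: "x \<in> space M" and qp0: "q x = 0 \<longrightarrow> p x = 0" for x
  proof (cases "q x = 0")
    case True
    then have "p x = 0" using qp0 by simp
    then show ?thesis using True by (simp add: R_def k_def)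
  next
    case False
    then have qp: "q x > 0" using Q(4)[OF x] by simp
    have u0: "w * p x \<ge> 0" using P(4)[OF x] w0 by simp
    have v0: "(1 - w) * q x > 0" using qp w1 by simp
    have e1: "k x + 2 * p x - q x = (p x)^2 / q x" using qp False
      by (simp add: k_def field_simps power2_eq_square)
    have e2: "w^2 / (1 - w) * ((p x)^2 / q x) = (w * p x)^2 / ((1 - w) * q x)"
      using w1 qp by (simp add: field_simps power2_eq_square)
    show ?thesis unfolding R_def e1 e2 by (rule chi_pt[OF u0 v0 cp])
  qed
  have RI: "integrable M R" unfolding R_def using P Q kI Im by auto
  have "(\<integral>x. 2 * (w * p x) \<partial>M) \<le> (\<integral>x. R x \<partial>M)"
  proof (rule integral_mono_AE)
    show "AE x in M. 2 * (w * p x) \<le> R x"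
      using AEpq AE_space by eventually_elim (use pt in blast)
  qed (use P RI in auto)
  moreover have "(\<integral>x. 2 * (w * p x) \<partial>M) = 2 * w" using P by simp
  moreover have "(\<integral>x. R x \<partial>M) = c * (w + w^2 / (1 - w) * (r + 2 - 1))
      + (m^2 * (w + (1 - w)) + (1 - 2 * m) * m) / c"
    unfolding R_def m_def mm_def using P Q kI Im kint by (simp add: diff_divide_distrib add_divide_distrib)
  ultimately have "2 * w \<le> c * S + m * (1 - m) / c"
    unfolding S_def using P(3) by (simp add: algebra_simps power2_eq_square)
  then have "2 * w \<le> w + m * (1 - m) * S / w" using Sp w0 by (simp add: c_def)
  then have "w \<le> m * (1 - m) * S / w" by simp
  then have "w * w \<le> m * (1 - m) * S" using w0 by (simp add: field_simps)
  also have "S = w * (1 + w * r) / (1 - w)" using w1 by (simp add: S_def field_simps power2_eq_square)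
  finally have "w * w * (1 - w) \<le> m * (1 - m) * (w * (1 + w * r))" using w1 by (simp add: field_simps)
  then have "w * ((1 - w) * w) \<le> w * (m * (1 - m) * (1 + w * r))" by (simp add: algebra_simps)
  then show ?thesis using w0 unfolding m_def by (simp add: mult.commute)
qed

lemma sq_aux:
  fixes m R :: real
  assumes "0 \<le> m" "m \<le> 1/2" "R \<le> m * (1 - m)"
  shows "1/2 - m \<le> sqrt (1/4 - R)"
proof (rule real_le_rsqrt)
  show "(1/2 - m)^2 \<le> 1/4 - R" using assms by (simp add: power2_eq_square algebra_simps)
qed

lemma esqrt_aux:
  fixes x :: real
  assumes "x \<ge> 0" "D1 \<ge> ereal (8 * x^2)" "D2 \<ge> ereal (8 * x^2)"
  shows "ereal x \<le> esqrt (min D1 D2 / 8)"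
proof -
  have mn: "min D1 D2 \<ge> ereal (8 * x^2)" using assms by simp
  show ?thesis
  proof (cases "min D1 D2")
    case (real s)
    then have "s \<ge> 8 * x^2" using mn by simp
    then have "x^2 \<le> s / 8" by simp
    then have "x \<le> sqrt (s / 8)" by (rule real_le_rsqrt)
    then show ?thesis using real by (simp add: esqrt_def)
  next
    case PInf then show ?thesis by (simp add: esqrt_def)
  next
    case MInf then show ?thesis using mn by simp
  qed
qed

lemma chi_nonneg: "chi2 M p q \<ge> 0"
  unfolding chi2_def by simp

lemma ratio_le:
  assumes dP: "is_density M p" and dQ: "is_density M q" and w0: "0 < w" and w1: "w < 1"
    and wv: "w \<le> v"
  shows "ratio_chi (w * (1 - w)) v (chi2 M p q) \<le> mm w M p q * (1 - mm w M p q)"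
proof -
  note mb = mm_bounds[OF dP dQ w0 w1]
  have mm0: "0 \<le> mm w M p q * (1 - mm w M p q)" using mb w1 by simp
  show ?thesis
  proof (cases "chi2 M p q")
    case (real r)
    have r0: "r \<ge> 0" using chi_nonneg[of M p q] real by simp
    have A: "w * (1 - w) \<le> mm w M p q * (1 - mm w M p q) * (1 + w * r)"
      by (rule chi_mm[OF dP dQ w0 w1 real])
    have p1: "1 + w * r > 0" using w0 r0 by (simp add: add_pos_nonneg)
    have le: "1 + w * r \<le> 1 + v * r" using wv r0 by (simp add: mult_right_mono)
    have "w * (1 - w) / (1 + v * r) \<le> w * (1 - w) / (1 + w * r)"
      by (rule divide_left_mono[OF le]) (use w0 w1 p1 le in auto)
    also have "\<dots> \<le> mm w M p q * (1 - mm w M p q)" using A p1 by (simp add: pos_divide_le_eq)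
    finally show ?thesis using real by (simp add: ratio_chi_def)
  qed (simp_all add: ratio_chi_def mm0)
qed

theorem theorem7:
  fixes M :: "'a measure" and p q :: "'a \<Rightarrow> real" and \<omega> :: real
  assumes dP: "is_density M p" and dQ: "is_density M q"
    and w0: "0 < \<omega>" and w1: "\<omega> < 1"
  shows
   "(\<omega> \<le> 1/2 \<longrightarrow> deGroot \<omega> M p q
        \<le> \<omega> - 1/2 + sqrt (1/4 - ratio_chi (\<omega> * (1 - \<omega>)) \<omega> (chi2 M p q)))
  \<and> (1/2 < \<omega> \<longrightarrow> deGroot \<omega> M p q
        \<le> 1/2 - \<omega> + sqrt (1/4 - ratio_chi (\<omega> * (1 - \<omega>)) \<omega> (chi2 M q p)))
  \<and> (\<omega> < 1/2 \<longrightarrow> ereal (deGroot \<omega> M p q)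
        \<le> ereal (\<omega> * c_gam ((1 - \<omega>) / \<omega>)) * KL M p q)
  \<and> (\<omega> = 1/2 \<longrightarrow> ereal (deGroot \<omega> M p q)
        \<le> esqrt (min (KL M p q) (KL M q p) / 8))
  \<and> (1/2 < \<omega> \<longrightarrow> ereal (deGroot \<omega> M p q)
        \<le> ereal ((1 - \<omega>) * c_gam (\<omega> / (1 - \<omega>))) * KL M q p)
  \<and> (\<omega> \<le> 1/2 \<longrightarrow> deGroot \<omega> M p q
        \<le> \<omega> - 1/2 + sqrt (1/4 - \<omega> * (1 - \<omega>) * expneg (KL M p q)))
  \<and> (1/2 < \<omega> \<longrightarrow> deGroot \<omega> M p q
        \<le> 1/2 - \<omega> + sqrt (1/4 - \<omega> * (1 - \<omega>) * expneg (KL M q p)))"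
proof -
  define m where "m = mm \<omega> M p q"
  have w0': "0 < 1 - \<omega>" and w1': "1 - \<omega> < 1" using w0 w1 by auto
  have sw: "mm (1 - \<omega>) M q p = m" unfolding m_def by (rule mm_swap)
  note mb = mm_bounds[OF dP dQ w0 w1, folded m_def]
  have dg: "deGroot \<omega> M p q = min \<omega> (1 - \<omega>) - m"
    unfolding m_def by (rule deGroot_eq[OF dP dQ w0 w1])
  have lo: "deGroot \<omega> M p q = \<omega> - m" if "\<omega> \<le> 1/2" using dg that by simp
  have hi: "deGroot \<omega> M p q = 1 - \<omega> - m" if "1/2 < \<omega>" using dg that by simp
  have P1: "deGroot \<omega> M p q \<le> \<omega> - 1/2 + sqrt (1/4 - ratio_chi (\<omega> * (1 - \<omega>)) \<omega> (chi2 M p q))"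
    if h: "\<omega> \<le> 1/2"
  proof -
    have "1/2 - m \<le> sqrt (1/4 - ratio_chi (\<omega> * (1 - \<omega>)) \<omega> (chi2 M p q))"
      by (rule sq_aux) (use mb h ratio_le[OF dP dQ w0 w1, of \<omega>] in \<open>auto simp: m_def\<close>)
    then show ?thesis using lo[OF h] by simp
  qed
  have P2: "deGroot \<omega> M p q \<le> 1/2 - \<omega> + sqrt (1/4 - ratio_chi (\<omega> * (1 - \<omega>)) \<omega> (chi2 M q p))"
    if h: "1/2 < \<omega>"
  proof -
    have R: "ratio_chi ((1 - \<omega>) * (1 - (1 - \<omega>))) \<omega> (chi2 M q p) \<le> m * (1 - m)"
      using ratio_le[OF dQ dP w0' w1', of \<omega>] h sw by simp
    have "1/2 - m \<le> sqrt (1/4 - ratio_chi (\<omega> * (1 - \<omega>)) \<omega> (chi2 M q p))"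
      by (rule sq_aux) (use mb h R in \<open>auto simp: mult.commute\<close>)
    then show ?thesis using hi[OF h] by simp
  qed
  have P3: "ereal (deGroot \<omega> M p q) \<le> ereal (\<omega> * c_gam ((1 - \<omega>) / \<omega>)) * KL M p q"
    if h: "\<omega> < 1/2"
    using lin_bound[OF dP dQ w0 h] lo[of] h unfolding m_def by simp
  have P4: "ereal (deGroot \<omega> M p q) \<le> esqrt (min (KL M p q) (KL M q p) / 8)"
    if h: "\<omega> = 1/2"
  proof -
    have A: "ereal (8 * (1/2 - m)^2) \<le> KL M p q" using pinsker[OF dP dQ] by (simp add: m_def h)
    have B: "ereal (8 * (1/2 - m)^2) \<le> KL M q p" using pinsker[OF dQ dP] sw h by simp
    have "ereal (1/2 - m) \<le> esqrt (min (KL M p q) (KL M q p) / 8)"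
      by (rule esqrt_aux[OF _ A B]) (use mb h in simp)
    then show ?thesis using lo h by (simp add: h)
  qed
  have P5: "ereal (deGroot \<omega> M p q) \<le> ereal ((1 - \<omega>) * c_gam (\<omega> / (1 - \<omega>))) * KL M q p"
    if h: "1/2 < \<omega>"
  proof -
    have "1 - \<omega> < 1/2" using h by simp
    from lin_bound[OF dQ dP w0' this] show ?thesis using hi[OF h] sw by simp
  qed
  have P6: "deGroot \<omega> M p q \<le> \<omega> - 1/2 + sqrt (1/4 - \<omega> * (1 - \<omega>) * expneg (KL M p q))"
    if h: "\<omega> \<le> 1/2"
  proof -
    have k: "\<omega> * (1 - \<omega>) \<ge> 0" using w0 w1 by simp
    have "\<omega> * (1 - \<omega>) * expneg (KL M p q) \<le> \<omega> * (1 - \<omega>) * (\<integral>x. sqrt (p x * q x) \<partial>M)^2"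
      by (rule mult_left_mono[OF bh_KL[OF dP dQ] k])
    also have "\<dots> \<le> m * (1 - m)" unfolding m_def by (rule bh_mm[OF dP dQ w0 w1])
    finally have R: "\<omega> * (1 - \<omega>) * expneg (KL M p q) \<le> m * (1 - m)" .
    have "1/2 - m \<le> sqrt (1/4 - \<omega> * (1 - \<omega>) * expneg (KL M p q))"
      by (rule sq_aux) (use mb h R in auto)
    then show ?thesis using lo[OF h] by simp
  qed
  have P7: "deGroot \<omega> M p q \<le> 1/2 - \<omega> + sqrt (1/4 - \<omega> * (1 - \<omega>) * expneg (KL M q p))"
    if h: "1/2 < \<omega>"
  proof -
    have k: "\<omega> * (1 - \<omega>) \<ge> 0" using w0 w1 by simp
    have "\<omega> * (1 - \<omega>) * expneg (KL M q p) \<le> \<omega> * (1 - \<omega>) * (\<integral>x. sqrt (q x * p x) \<partial>M)^2"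
      by (rule mult_left_mono[OF bh_KL[OF dQ dP] k])
    also have "\<dots> = (1 - \<omega>) * (1 - (1 - \<omega>)) * (\<integral>x. sqrt (q x * p x) \<partial>M)^2" by simp
    also have "\<dots> \<le> m * (1 - m)" using bh_mm[OF dQ dP w0' w1'] sw by simp
    finally have R: "\<omega> * (1 - \<omega>) * expneg (KL M q p) \<le> m * (1 - m)" .
    have "1/2 - m \<le> sqrt (1/4 - \<omega> * (1 - \<omega>) * expneg (KL M q p))"
      by (rule sq_aux) (use mb h R in auto)
    then show ?thesis using hi[OF h] by simp
  qed
  show ?thesis using P1 P2 P3 P4 P5 P6 P7 by blast
qed

end
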